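(* Let $n$ be a positive integer, let $f,g\in\mathcal{A}_n$ and let $\phi\in\mathcal{H}[1,n]$ with $\phi(0)=1$ and $\phi(z)\neq 0$ in $\mathbb{D}$. Let $h$ be a convex function in $\mathbb{D}$ with $h(0)=1$, and let $\beta,\alpha,\sigma$ be complex numbers with $\beta\neq 0$ and $\operatorname{Re}(\beta h(z)+\alpha)>0$ in $\mathbb{D}$. Suppose $$\beta\frac{zf'(z)}{f(z)}+\sigma\frac{zg'(z)}{g(z)}\prec \beta h(z)+\sigma.$$ If $F$ is defined by $$F(z)=\left(\frac{\beta+\alpha}{z^{\alpha}\phi(z)}\int_0^zf^{\beta}(t)g^{\sigma}(t)t^{\alpha-\sigma-1}\,dt\right)^{1/\beta},$$ then $F\in\mathcal{A}_n$ and $$\frac{zF'(z)}{F(z)}+\frac{1}{\beta}\frac{z\phi'(z)}{\phi(z)}\prec h(z).$$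
   Context: $\mathbb{D}$ is the open unit disk. $\mathcal{H}[1,n]$ is the class of functions analytic in $\mathbb{D}$ of the form $1+a_nz^n+\cdots$; $\mathcal{A}_n$ is the class of functions analytic in $\mathbb{D}$ of the form $z+a_{n+1}z^{n+1}+\cdots$. A convex function is a univalent analytic function mapping $\mathbb{D}$ onto a convex domain. $f\prec F$ means $f=F\circ\omega$ for some analytic $\omega:\mathbb{D}\to\mathbb{D}$ with $\omega(0)=0$. Complex powers are understood as the analytic branches normalized at the origin. *)

theory Defs
  imports "HOL-Complex_Analysis.Complex_Analysis"
begin

definition unit_disk :: "complex set" where
  "unit_disk = ball 0 1"

definition divz :: "(complex \<Rightarrow> complex) \<Rightarrow> complex \<Rightarrow> complex" where
  "divz f z = (if z = 0 then deriv f 0 else f z / z)"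

text \<open>The class A_n: analytic in the disk, of the form z + a_{n+1} z^{n+1} + ...\<close>
definition class_A :: "nat \<Rightarrow> (complex \<Rightarrow> complex) \<Rightarrow> bool" where
  "class_A n f \<longleftrightarrow> f holomorphic_on unit_disk \<and> f 0 = 0 \<and> deriv f 0 = 1 \<and>
      (\<forall>k\<in>{2..n}. (deriv ^^ k) f 0 = 0)"

text \<open>The class H[1,n]: analytic in the disk, of the form 1 + a_n z^n + ...\<close>
definition class_H1 :: "nat \<Rightarrow> (complex \<Rightarrow> complex) \<Rightarrow> bool" where
  "class_H1 n p \<longleftrightarrow> p holomorphic_on unit_disk \<and> p 0 = 1 \<and>
      (\<forall>k\<in>{1..<n}. (deriv ^^ k) p 0 = 0)"

definition convex_function :: "(complex \<Rightarrow> complex) \<Rightarrow> bool" where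
  "convex_function h \<longleftrightarrow> h holomorphic_on unit_disk \<and> inj_on h unit_disk \<and>
      convex (h ` unit_disk)"

definition subordinate :: "(complex \<Rightarrow> complex) \<Rightarrow> (complex \<Rightarrow> complex) \<Rightarrow> bool" where
  "subordinate f F \<longleftrightarrow> (\<exists>\<omega>. \<omega> holomorphic_on unit_disk \<and> \<omega> ` unit_disk \<subseteq> unit_disk \<and>
      \<omega> 0 = 0 \<and> (\<forall>z\<in>unit_disk. f z = F (\<omega> z)))"

text \<open>Analytic branch of log q normalized at the origin (for q nonvanishing analytic
  in the disk with q 0 = 1): integral of q'/q along the segment [0,z].\<close>
definition branch_log :: "(complex \<Rightarrow> complex) \<Rightarrow> complex \<Rightarrow> complex" where
  "branch_log q z = contour_integral (linepath 0 z) (\<lambda>w. deriv q w / q w)"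

definition branch_pow :: "(complex \<Rightarrow> complex) \<Rightarrow> complex \<Rightarrow> complex \<Rightarrow> complex" where
  "branch_pow q c z = exp (c * branch_log q z)"

text \<open>Writing f^\<beta>(t) = t^\<beta> (f(t)/t)^\<beta>,
  g^\<sigma>(t) = t^\<sigma> (g(t)/t)^\<sigma> and substituting t = s z, one gets
  F(z) = z * Q(z)^(1/\<beta>) with
  Q(z) = (\<beta>+\<alpha>)/\<phi>(z) * \<integral>_0^1 s^(\<beta>+\<alpha>-1) (f(sz)/(sz))^\<beta> (g(sz)/(sz))^\<sigma> ds,
  all branches normalized at the origin.\<close>
definition Q_op :: "complex \<Rightarrow> complex \<Rightarrow> complex \<Rightarrow> (complex \<Rightarrow> complex) \<Rightarrow>
    (complex \<Rightarrow> complex) \<Rightarrow> (complex \<Rightarrow> complex) \<Rightarrow> complex \<Rightarrow> complex" where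
  "Q_op \<beta> \<alpha> \<sigma> f g \<phi> z = (\<beta> + \<alpha>) / \<phi> z *
     integral {0..1} (\<lambda>s::real. of_real s powr (\<beta> + \<alpha> - 1) *
        branch_pow (divz f) \<beta> (of_real s * z) * branch_pow (divz g) \<sigma> (of_real s * z))"

definition F_op :: "complex \<Rightarrow> complex \<Rightarrow> complex \<Rightarrow> (complex \<Rightarrow> complex) \<Rightarrow>
    (complex \<Rightarrow> complex) \<Rightarrow> (complex \<Rightarrow> complex) \<Rightarrow> complex \<Rightarrow> complex" where
  "F_op \<beta> \<alpha> \<sigma> f g \<phi> z = z * branch_pow (Q_op \<beta> \<alpha> \<sigma> f g \<phi>) (1 / \<beta>) z"

end

theory Submission
  imports Defs
begin


lemma ud_open[simp]: "open unit_disk" by (simp add: unit_disk_def)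
lemma ud_convex[simp]: "convex unit_disk" by (simp add: unit_disk_def)
lemma ud_0[simp]: "0 \<in> unit_disk" by (simp add: unit_disk_def)
lemma ud_iff: "z \<in> unit_disk \<longleftrightarrow> norm z < 1" by (simp add: unit_disk_def)

lemma branch_log_deriv:
  assumes hol: "q holomorphic_on unit_disk" and nz: "\<forall>z\<in>unit_disk. q z \<noteq> 0"
    and z: "z \<in> unit_disk"
  shows "(branch_log q has_field_derivative deriv q z / q z) (at z)"
proof -
  let ?f = "\<lambda>w. deriv q w / q w"
  have holf: "?f holomorphic_on unit_disk"
    using hol nz by (intro holomorphic_intros holomorphic_deriv) auto
  have contf: "continuous_on unit_disk ?f"
    using holf holomorphic_on_imp_continuous_on by blast
  have subs: "closed_segment 0 y \<subseteq> unit_disk" if "y \<in> unit_disk" for y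
    using that by (simp add: closed_segment_subset)
  have zer: "contour_integral (linepath 0 b) ?f + contour_integral (linepath b c) ?f +
        contour_integral (linepath c 0) ?f = 0" if "closed_segment b c \<subseteq> unit_disk" for b c
  proof -
    have "b \<in> unit_disk" "c \<in> unit_disk" using that ends_in_segment by blast+
    then have "convex hull {0, b, c} \<subseteq> unit_disk"
      by (intro hull_minimal) auto
    then have "?f holomorphic_on convex hull {0,b,c}"
      using holf holomorphic_on_subset by blast
    then show ?thesis
      by (rule has_chain_integral_chain_integral3[OF Cauchy_theorem_triangle])
  qed
  show ?thesis
    unfolding branch_log_def
    by (rule triangle_contour_integrals_starlike_primitive[OF contf ud_0 ud_open z subs zer])
qed

lemma branch_log_0[simp]: "branch_log q 0 = 0"
  by (simp add: branch_log_def)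

lemma branch_log_holo:
  assumes hol: "q holomorphic_on unit_disk" and nz: "\<forall>z\<in>unit_disk. q z \<noteq> 0"
  shows "branch_log q holomorphic_on unit_disk"
  unfolding holomorphic_on_open[OF ud_open] using branch_log_deriv[OF assms] by blast

lemma exp_branch_log:
  assumes hol: "q holomorphic_on unit_disk" and nz: "\<forall>z\<in>unit_disk. q z \<noteq> 0"
    and z: "z \<in> unit_disk"
  shows "exp (branch_log q z) = q z / q 0"
proof -
  have "\<exists>c. \<forall>x\<in>unit_disk. q x * exp (- branch_log q x) = c"
  proof (rule has_field_derivative_zero_constant[OF ud_convex])
    fix x assume x: "x \<in> unit_disk"
    have dq: "(q has_field_derivative deriv q x) (at x)"
      using hol x by (meson holomorphic_derivI ud_open)
    have "((\<lambda>x. q x * exp (- branch_log q x)) has_field_derivative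
       deriv q x * exp (- branch_log q x) + q x * (exp (- branch_log q x) * (- (deriv q x / q x)))) (at x)"
    proof -
      have db: "((\<lambda>x. - branch_log q x) has_field_derivative - (deriv q x / q x)) (at x)"
        using branch_log_deriv[OF hol nz x] by (rule DERIV_minus)
      have "((\<lambda>x. exp (- branch_log q x)) has_field_derivative exp (- branch_log q x) * (- (deriv q x / q x))) (at x)"
        using DERIV_chain2[OF DERIV_exp db] .
      from DERIV_mult[OF dq this] show ?thesis by (simp add: mult_ac)
    qed
    moreover have "deriv q x * exp (- branch_log q x) + q x * (exp (- branch_log q x) * (- (deriv q x / q x))) = 0"
      using nz x by (simp add: field_simps)
    ultimately show "((\<lambda>x. q x * exp (- branch_log q x)) has_field_derivative 0) (at x within unit_disk)"
      by (metis has_field_derivative_at_within)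
  qed
  then obtain c where c: "\<forall>x\<in>unit_disk. q x * exp (- branch_log q x) = c" by blast
  have "c = q 0 * exp (- branch_log q 0)" using bspec[OF c ud_0] by simp
  then have "c = q 0" by simp
  with c z have "q z * exp (- branch_log q z) = q 0" by auto
  then show ?thesis using nz by (simp add: exp_minus field_simps)
qed

lemma branch_pow_deriv:
  assumes hol: "q holomorphic_on unit_disk" and nz: "\<forall>z\<in>unit_disk. q z \<noteq> 0"
    and z: "z \<in> unit_disk"
  shows "(branch_pow q c has_field_derivative c * (deriv q z / q z) * branch_pow q c z) (at z)"
proof -
  have "((\<lambda>z. c * branch_log q z) has_field_derivative c * (deriv q z / q z)) (at z)"
    by (rule DERIV_cmult[OF branch_log_deriv[OF hol nz z]])
  from DERIV_chain2[OF DERIV_exp this] show ?thesis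
    unfolding branch_pow_def by (simp add: mult_ac)
qed

lemma branch_pow_holo:
  assumes hol: "q holomorphic_on unit_disk" and nz: "\<forall>z\<in>unit_disk. q z \<noteq> 0"
  shows "branch_pow q c holomorphic_on unit_disk"
  unfolding holomorphic_on_open[OF ud_open] using branch_pow_deriv[OF assms] by blast

lemma branch_pow_0[simp]: "branch_pow q c 0 = 1"
  by (simp add: branch_pow_def)

lemma branch_pow_nz: "branch_pow q c z \<noteq> 0"
  by (simp add: branch_pow_def)



lemma divz_holo:
  assumes "f holomorphic_on unit_disk" "f 0 = 0"
  shows "divz f holomorphic_on unit_disk"
proof -
  have "(\<lambda>z. if z = 0 then deriv f 0 else (f z - f 0) / (z - 0)) holomorphic_on unit_disk"
    by (rule pole_lemma_open[OF assms(1) ud_open])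
  moreover have "(\<lambda>z. if z = 0 then deriv f 0 else (f z - f 0) / (z - 0)) = divz f"
    using assms(2) by (auto simp: divz_def)
  ultimately show ?thesis by simp
qed

lemma divz_eq: "z \<noteq> 0 \<Longrightarrow> divz f z = f z / z"
  by (simp add: divz_def)

lemma divz_0: "divz f 0 = deriv f 0"
  by (simp add: divz_def)

lemma divz_mult:
  assumes "f 0 = 0" shows "z * divz f z = f z"
  using assms by (cases "z = 0") (auto simp: divz_def)

lemma divz_nz:
  assumes "deriv f 0 = 1" "\<forall>z\<in>unit_disk - {0}. f z \<noteq> 0" "z \<in> unit_disk"
  shows "divz f z \<noteq> 0"
  using assms by (cases "z = 0") (auto simp: divz_def)

lemma divz_deriv:
  assumes hol: "f holomorphic_on unit_disk" and f0: "f 0 = 0" and z: "z \<in> unit_disk" "z \<noteq> 0"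
  shows "deriv (divz f) z = (z * deriv f z - f z) / z^2"
proof -
  have df: "(f has_field_derivative deriv f z) (at z)"
    using hol z by (meson holomorphic_derivI ud_open)
  have "((\<lambda>w. f w / w) has_field_derivative (deriv f z * z - f z * 1) / (z * z)) (at z)"
    by (rule DERIV_divide[OF df DERIV_ident]) (use z in auto)
  then have "(divz f has_field_derivative (deriv f z * z - f z * 1) / (z * z)) (at z)"
  proof (rule has_field_derivative_transform_within_open[where S="-{0}"])
    show "\<And>w. w \<in> -{0} \<Longrightarrow> f w / w = divz f w"
      by (simp add: divz_eq)
  qed (use z in auto)
  then show ?thesis
    by (simp add: DERIV_imp_deriv power2_eq_square mult.commute)
qed

definition flatn :: "nat \<Rightarrow> (complex \<Rightarrow> complex) \<Rightarrow> bool" where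
  "flatn n f \<longleftrightarrow> (\<forall>k\<in>{1..<n}. (deriv ^^ k) f 0 = 0)"

lemma higher_deriv_Suc': "(deriv ^^ Suc k) f z = (deriv ^^ k) (deriv f) z"
  by (simp add: funpow_Suc_right del: funpow.simps)

lemma hd_mult0:
  assumes "A holomorphic_on unit_disk" "V holomorphic_on unit_disk"
  shows "(deriv ^^ k) (\<lambda>z. A z * V z) 0 =
     (\<Sum>i = 0..k. of_nat (k choose i) * (deriv ^^ i) A 0 * (deriv ^^ (k-i)) V 0)"
  by (rule higher_deriv_mult[OF assms ud_open ud_0])

lemma hd_transform:
  assumes "f holomorphic_on unit_disk" "g holomorphic_on unit_disk" "\<And>z. z \<in> unit_disk \<Longrightarrow> f z = g z"
  shows "(deriv ^^ k) f 0 = (deriv ^^ k) g 0"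
  by (rule higher_deriv_transform_within_open[OF assms(1,2) ud_open ud_0 assms(3)])

lemma div_lemma:
  assumes hA: "A holomorphic_on unit_disk" and hV: "V holomorphic_on unit_disk"
    and hW: "W holomorphic_on unit_disk"
    and eq: "\<And>z. z \<in> unit_disk \<Longrightarrow> A z * V z = W z" and V0: "V 0 \<noteq> 0"
    and W0: "\<forall>i<m. (deriv ^^ i) W 0 = 0"
  shows "\<forall>i<m. (deriv ^^ i) A 0 = 0"
proof (intro allI impI)
  fix i assume "i < m"
  then show "(deriv ^^ i) A 0 = 0"
  proof (induction i rule: less_induct)
    case (less i)
    have hAV: "(\<lambda>z. A z * V z) holomorphic_on unit_disk" using hA hV by (intro holomorphic_intros)
    have "(deriv ^^ i) W 0 = (deriv ^^ i) (\<lambda>z. A z * V z) 0"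
      by (rule hd_transform[OF hW hAV]) (simp add: eq)
    also have "\<dots> = (\<Sum>j = 0..i. of_nat (i choose j) * (deriv ^^ j) A 0 * (deriv ^^ (i-j)) V 0)"
      by (rule hd_mult0[OF hA hV])
    also have "\<dots> = (\<Sum>j \<in> insert i {0..<i}. of_nat (i choose j) * (deriv ^^ j) A 0 * (deriv ^^ (i-j)) V 0)"
      by (intro sum.cong) auto
    also have "\<dots> = (deriv ^^ i) A 0 * V 0 + (\<Sum>j \<in> {0..<i}. of_nat (i choose j) * (deriv ^^ j) A 0 * (deriv ^^ (i-j)) V 0)"
      by (subst sum.insert) auto
    also have "(\<Sum>j \<in> {0..<i}. of_nat (i choose j) * (deriv ^^ j) A 0 * (deriv ^^ (i-j)) V 0) = 0"
      using less by (intro sum.neutral) auto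
    finally have "(deriv ^^ i) A 0 * V 0 = 0" using W0 less by simp
    then show ?case using V0 by simp
  qed
qed

lemma exp_lemma:
  assumes hA: "A holomorphic_on unit_disk" and hE: "E holomorphic_on unit_disk"
    and eq: "\<And>z. z \<in> unit_disk \<Longrightarrow> deriv E z = A z * E z"
    and A0: "\<forall>i<m. (deriv ^^ i) A 0 = 0"
  shows "flatn (Suc m) E"
  unfolding flatn_def
proof
  fix k assume k: "k \<in> {1..<Suc m}"
  then obtain j where j: "k = Suc j" "j < m" by (cases k) auto
  have hdE: "deriv E holomorphic_on unit_disk" using hE by (intro holomorphic_deriv) auto
  have hAE: "(\<lambda>z. A z * E z) holomorphic_on unit_disk" using hA hE by (intro holomorphic_intros)
  have "(deriv ^^ k) E 0 = (deriv ^^ j) (deriv E) 0" using j higher_deriv_Suc' by simp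
  also have "\<dots> = (deriv ^^ j) (\<lambda>z. A z * E z) 0"
    by (rule hd_transform[OF hdE hAE]) (simp add: eq)
  also have "\<dots> = (\<Sum>i = 0..j. of_nat (j choose i) * (deriv ^^ i) A 0 * (deriv ^^ (j-i)) E 0)"
    by (rule hd_mult0[OF hA hE])
  also have "\<dots> = 0" using A0 j by (intro sum.neutral) auto
  finally show "(deriv ^^ k) E 0 = 0" .
qed

lemma flatn_mult:
  assumes hf: "f holomorphic_on unit_disk" and hg: "g holomorphic_on unit_disk"
    and "flatn n f" "flatn n g"
  shows "flatn n (\<lambda>z. f z * g z)"
  unfolding flatn_def
proof
  fix k assume k: "k \<in> {1..<n}"
  have "(deriv ^^ k) (\<lambda>z. f z * g z) 0 = (\<Sum>i = 0..k. of_nat (k choose i) * (deriv ^^ i) f 0 * (deriv ^^ (k-i)) g 0)"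
    by (rule hd_mult0[OF hf hg])
  also have "\<dots> = 0"
  proof (intro sum.neutral ballI)
    fix i assume i: "i \<in> {0..k}"
    show "of_nat (k choose i) * (deriv ^^ i) f 0 * (deriv ^^ (k-i)) g 0 = 0"
    proof (cases "i = 0")
      case True then show ?thesis using assms(4) k by (auto simp: flatn_def)
    next
      case False then show ?thesis using assms(3) k i by (auto simp: flatn_def)
    qed
  qed
  finally show "(deriv ^^ k) (\<lambda>z. f z * g z) 0 = 0" .
qed

lemma hd_zmult:
  assumes hE: "E holomorphic_on unit_disk" and k: "k \<ge> 1"
  shows "(deriv ^^ k) (\<lambda>z. z * E z) 0 = of_nat k * (deriv ^^ (k - 1)) E 0"
proof -
  have "(deriv ^^ k) (\<lambda>z. z * E z) 0 = (\<Sum>i = 0..k. of_nat (k choose i) * (deriv ^^ i) (\<lambda>z. z) 0 * (deriv ^^ (k-i)) E 0)"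
    by (rule hd_mult0[OF holomorphic_on_ident hE])
  also have "\<dots> = (\<Sum>i = 0..k. if i = 1 then of_nat k * (deriv ^^ (k - 1)) E 0 else 0)"
    by (intro sum.cong) auto
  also have "\<dots> = of_nat k * (deriv ^^ (k - 1)) E 0" using k by (simp add: sum.delta)
  finally show ?thesis .
qed

lemma divz_flat:
  assumes "class_A n f"
  shows "flatn n (divz f)"
proof -
  have hol: "f holomorphic_on unit_disk" and f0: "f 0 = 0" and d0: "(\<forall>k\<in>{2..n}. (deriv ^^ k) f 0 = 0)"
    using assms by (auto simp: class_A_def)
  have hd: "divz f holomorphic_on unit_disk" using divz_holo[OF hol f0] .
  show ?thesis unfolding flatn_def
  proof
    fix k assume k: "k \<in> {1..<n}"
    have "(deriv ^^ Suc k) f 0 = (deriv ^^ Suc k) (\<lambda>z. z * divz f z) 0"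
      by (rule hd_transform[OF hol holomorphic_on_mult[OF holomorphic_on_ident hd]]) (simp add: divz_mult[of f, OF f0])
    also have "\<dots> = of_nat (Suc k) * (deriv ^^ k) (divz f) 0"
      by (subst hd_zmult[OF hd]) auto
    finally have eq: "(deriv ^^ Suc k) f 0 = of_nat (Suc k) * (deriv ^^ k) (divz f) 0" .
    have "Suc k \<in> {2..n}" using k by auto
    then have z0: "(deriv ^^ Suc k) f 0 = 0" using d0 by blast
    have "of_nat (Suc k) * (deriv ^^ k) (divz f) 0 = 0" using eq z0 by (simp del: of_nat_Suc funpow.simps)
    then show "(deriv ^^ k) (divz f) 0 = 0" by (simp del: of_nat_Suc)
  qed
qed



definition Iop :: "complex \<Rightarrow> (complex \<Rightarrow> complex) \<Rightarrow> complex \<Rightarrow> complex" where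
  "Iop c G z = integral {0..1} (\<lambda>s::real. of_real s powr (c - 1) * G (of_real s * z))"

lemma Iop_fun: "Iop c G = (\<lambda>z. integral {0..1} (\<lambda>s::real. of_real s powr (c - 1) * G (of_real s * z)))"
  by (rule ext) (simp only: Iop_def)

lemma powr_cont:
  assumes "Re c > 0"
  shows "continuous_on {0..1} (\<lambda>s::real. complex_of_real s powr c)"
  by (rule continuous_on_powr_complex) (use assms in \<open>auto intro!: continuous_intros\<close>)

lemma powr_vderiv:
  assumes "s > 0"
  shows "((\<lambda>s::real. complex_of_real s powr c) has_vector_derivative (c * of_real s powr (c - 1))) (at s within T)"
proof -
  have "of_real s \<notin> \<real>\<^sub>\<le>\<^sub>0" using assms by (auto simp: complex_nonpos_Reals_iff)
  then have "((\<lambda>z. z powr c) has_field_derivative (c * of_real s powr (c - 1))) (at (of_real s))"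
    by (rule has_field_derivative_powr)
  then show ?thesis by (rule has_vector_derivative_real_field)
qed

lemma powr_has_integral:
  assumes "Re c > 0"
  shows "((\<lambda>s::real. complex_of_real s powr (c - 1)) has_integral 1 / c) {0..1}"
proof -
  have c0: "c \<noteq> 0" using assms by auto
  have "((\<lambda>s. c * of_real s powr (c - 1) / c) has_integral
      (complex_of_real 1 powr c / c - complex_of_real 0 powr c / c)) {0..1}"
  proof (rule fundamental_theorem_of_calculus_interior_strong[where S="{}"])
    show "continuous_on {0..1} (\<lambda>s::real. complex_of_real s powr c / c)"
      using continuous_on_mult_right[OF powr_cont[OF assms], of "inverse c"] by (simp add: divide_inverse)
    fix x :: real assume "x \<in> {0<..<1} - {}"
    then have "x > 0" by auto
    from powr_vderiv[OF this, of c UNIV]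
    show "((\<lambda>s. complex_of_real s powr c / c) has_vector_derivative c * of_real x powr (c - 1) / c) (at x)"
      by (intro derivative_eq_intros) auto
  qed auto
  then show ?thesis using c0 by simp
qed

lemma powr_integrable:
  assumes "Re c > 0"
  shows "(\<lambda>s::real. complex_of_real s powr (c - 1)) integrable_on {0..1}"
  using powr_has_integral[OF assms] by blast

lemma powr_mult_s:
  fixes s :: real
  assumes "s \<ge> 0"
  shows "complex_of_real s powr (c - 1) * of_real s = of_real s powr c"
proof (cases "s = 0")
  case False
  then have "complex_of_real s \<noteq> 0" by simp
  have "complex_of_real s powr c = complex_of_real s powr ((c - 1) + 1)" by simp
  also have "\<dots> = complex_of_real s powr (c - 1) * complex_of_real s powr 1" by (rule powr_add)
  finally show ?thesis by simp
qed auto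

lemma segment_in_disk:
  fixes s :: real
  assumes "s \<in> {0..1}" "z \<in> unit_disk"
  shows "of_real s * z \<in> unit_disk"
proof -
  have "norm (of_real s * z) = s * norm z" using assms by (simp add: norm_mult)
  also have "\<dots> \<le> norm z" using assms by (simp add: mult_left_le_one_le)
  finally show ?thesis using assms by (simp add: ud_iff)
qed

lemma cont_comp_seg:
  assumes "continuous_on unit_disk G" "z \<in> unit_disk"
  shows "continuous_on {0..1} (\<lambda>s::real. G (of_real s * z))"
proof (rule continuous_on_compose2[OF assms(1)])
  show "continuous_on {0..1} (\<lambda>s::real. complex_of_real s * z)"
    by (intro continuous_intros)
  show "(\<lambda>s::real. complex_of_real s * z) ` {0..1} \<subseteq> unit_disk"
    using segment_in_disk assms by blast
qed

lemma Iop_integrable: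
  assumes c: "Re c > 0" and hG: "G holomorphic_on unit_disk" and z: "z \<in> unit_disk"
  shows "(\<lambda>s::real. of_real s powr (c - 1) * G (of_real s * z)) integrable_on {0..1}"
proof -
  define G1 where "G1 = (\<lambda>w. if w = 0 then deriv G 0 else (G w - G 0) / (w - 0))"
  have hG1: "G1 holomorphic_on unit_disk"
    unfolding G1_def by (rule pole_lemma_open[OF hG ud_open])
  have G1eq: "G w = G 0 + w * G1 w" for w
    by (cases "w = 0") (auto simp: G1_def)
  have i1: "(\<lambda>s::real. G 0 * of_real s powr (c - 1)) integrable_on {0..1}"
    by (rule integrable_on_mult_right[OF powr_integrable[OF c]])
  have "continuous_on {0..1} (\<lambda>s::real. of_real s powr c * G1 (of_real s * z))"
    by (intro continuous_on_mult powr_cont[OF c] cont_comp_seg[OF _ z]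
        holomorphic_on_imp_continuous_on hG1)
  then have i2: "(\<lambda>s::real. z * (of_real s powr c * G1 (of_real s * z))) integrable_on {0..1}"
    by (intro integrable_on_mult_right integrable_continuous_interval)
  have "(\<lambda>s::real. G 0 * of_real s powr (c - 1) + z * (of_real s powr c * G1 (of_real s * z))) integrable_on {0..1}"
    by (rule integrable_add[OF i1 i2])
  then show ?thesis
  proof (rule integrable_spike[OF _ negligible_empty])
    fix s :: real assume "s \<in> {0..1} - {}"
    then have s: "s \<ge> 0" by auto
    have "of_real s powr (c - 1) * G (of_real s * z) =
        G 0 * of_real s powr (c - 1) + z * ((of_real s powr (c - 1) * of_real s) * G1 (of_real s * z))"
      by (subst G1eq) (simp add: algebra_simps)
    also have "\<dots> = G 0 * of_real s powr (c - 1) + z * (of_real s powr c * G1 (of_real s * z))"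
      by (simp add: powr_mult_s[OF s])
    finally show "of_real s powr (c - 1) * G (of_real s * z) =
        G 0 * of_real s powr (c - 1) + z * (of_real s powr c * G1 (of_real s * z))" .
  qed
qed

lemma Iop_deriv:
  assumes c: "Re c > 0" and hG: "G holomorphic_on unit_disk" and z: "z \<in> unit_disk"
  shows "(Iop c G has_field_derivative Iop (c + 1) (deriv G) z) (at z)"
proof -
  have hdG: "deriv G holomorphic_on unit_disk" using hG by (intro holomorphic_deriv) auto
  have "((\<lambda>x. integral (cbox 0 1) (\<lambda>t::real. of_real t powr (c - 1) * G (of_real t * x)))
      has_field_derivative integral (cbox 0 1) (\<lambda>t. of_real t powr c * deriv G (of_real t * z))) (at z within unit_disk)"
  proof (rule leibniz_rule_field_derivative[where U=unit_disk])
    fix x and t :: real assume x: "x \<in> unit_disk" and t: "t \<in> cbox 0 1"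
    then have t': "t \<in> {0..1}" by auto
    have tx: "of_real t * x \<in> unit_disk" using segment_in_disk[OF t' x] .
    have dG: "(G has_field_derivative deriv G (of_real t * x)) (at (of_real t * x))"
      using hG tx by (meson holomorphic_derivI ud_open)
    have "((\<lambda>x. G (of_real t * x)) has_field_derivative deriv G (of_real t * x) * of_real t) (at x)"
      using DERIV_chain2[OF dG DERIV_cmult[OF DERIV_ident, of "of_real t"]] by simp
    then have "((\<lambda>x. of_real t powr (c - 1) * G (of_real t * x)) has_field_derivative
        of_real t powr (c - 1) * (deriv G (of_real t * x) * of_real t)) (at x)"
      by (rule DERIV_cmult)
    moreover have "of_real t powr (c - 1) * (deriv G (of_real t * x) * of_real t) = of_real t powr c * deriv G (of_real t * x)"
      using powr_mult_s[of t c] t' by (simp add: mult_ac)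
    ultimately show "((\<lambda>x. of_real t powr (c - 1) * G (of_real t * x)) has_field_derivative
        of_real t powr c * deriv G (of_real t * x)) (at x within unit_disk)"
      by (simp add: has_field_derivative_at_within)
  next
    fix x assume "x \<in> unit_disk"
    then show "(\<lambda>t::real. of_real t powr (c - 1) * G (of_real t * x)) integrable_on cbox 0 1"
      using Iop_integrable[OF c hG] by (simp add: interval_cbox[symmetric])
  next
    have c1: "continuous_on (unit_disk \<times> cbox 0 1) (\<lambda>(x, t::real). of_real t powr c)"
    proof -
      have "continuous_on (unit_disk \<times> cbox 0 1) ((\<lambda>t::real. of_real t powr c) \<circ> snd)"
      proof (rule continuous_on_compose)
        show "continuous_on (unit_disk \<times> cbox 0 1) snd" by (intro continuous_intros)
        have "snd ` (unit_disk \<times> cbox (0::real) 1) \<subseteq> {0..1}" by auto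
        then show "continuous_on (snd ` (unit_disk \<times> cbox (0::real) 1)) (\<lambda>t::real. of_real t powr c)"
          using powr_cont[OF c] continuous_on_subset by blast
      qed
      then show ?thesis by (simp add: o_def case_prod_beta)
    qed
    have c2: "continuous_on (unit_disk \<times> cbox 0 1) (\<lambda>(x, t::real). deriv G (of_real t * x))"
    proof -
      have "continuous_on (unit_disk \<times> cbox 0 1) (deriv G \<circ> (\<lambda>p. of_real (snd p) * fst p))"
      proof (rule continuous_on_compose)
        show "continuous_on (unit_disk \<times> cbox 0 1) (\<lambda>p::complex\<times>real. of_real (snd p) * fst p)"
          by (intro continuous_intros)
        have "(\<lambda>p::complex\<times>real. of_real (snd p) * fst p) ` (unit_disk \<times> cbox 0 1) \<subseteq> unit_disk"
          using segment_in_disk by auto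
        then show "continuous_on ((\<lambda>p::complex\<times>real. of_real (snd p) * fst p) ` (unit_disk \<times> cbox 0 1)) (deriv G)"
          using hdG holomorphic_on_imp_continuous_on continuous_on_subset by blast
      qed
      then show ?thesis by (simp add: o_def case_prod_beta)
    qed
    show "continuous_on (unit_disk \<times> cbox 0 1) (\<lambda>(x, t::real). of_real t powr c * deriv G (of_real t * x))"
      using continuous_on_mult[OF c1 c2] by (simp add: case_prod_beta)
  qed (use z in auto)
  then show ?thesis
    by (simp add: Iop_fun Iop_def interval_cbox[symmetric] at_within_open[OF z ud_open])
qed

lemma Iop_holo:
  assumes c: "Re c > 0" and hG: "G holomorphic_on unit_disk"
  shows "Iop c G holomorphic_on unit_disk"
  unfolding holomorphic_on_open[OF ud_open] using Iop_deriv[OF c hG] by blast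

lemma Iop_FTC:
  assumes c: "Re c > 0" and hG: "G holomorphic_on unit_disk" and z: "z \<in> unit_disk"
  shows "z * Iop (c + 1) (deriv G) z + c * Iop c G z = G z"
proof -
  have hdG: "deriv G holomorphic_on unit_disk" using hG by (intro holomorphic_deriv) auto
  have "((\<lambda>s. c * of_real s powr (c - 1) * G (of_real s * z) + of_real s powr c * (deriv G (of_real s * z) * z))
     has_integral (complex_of_real 1 powr c * G (of_real 1 * z) - complex_of_real 0 powr c * G (of_real 0 * z))) {0..1}"
  proof (rule fundamental_theorem_of_calculus_interior_strong[where S="{}"])
    show "continuous_on {0..1} (\<lambda>s::real. of_real s powr c * G (of_real s * z))"
      by (intro continuous_on_mult powr_cont[OF c] cont_comp_seg[OF _ z] holomorphic_on_imp_continuous_on hG)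
    fix x :: real assume "x \<in> {0<..<1} - {}"
    then have x: "x > 0" "x \<in> {0..1}" by auto
    have xz: "of_real x * z \<in> unit_disk" using segment_in_disk[OF x(2) z] .
    have dG: "(G has_field_derivative deriv G (of_real x * z)) (at (of_real x * z))"
      using hG xz by (meson holomorphic_derivI ud_open)
    have "((\<lambda>s::real. of_real s * z) has_vector_derivative z) (at x)"
      using has_vector_derivative_real_field[of "\<lambda>w. w * z" z x UNIV] 
      by (simp add: DERIV_cmult_right[OF DERIV_ident, simplified])
    from field_vector_diff_chain_at[OF this dG]
    have "((\<lambda>s::real. G (of_real s * z)) has_vector_derivative z * deriv G (of_real x * z)) (at x)"
      by (simp add: o_def)
    from has_vector_derivative_mult[OF powr_vderiv[OF x(1)] this]
    show "((\<lambda>s::real. of_real s powr c * G (of_real s * z)) has_vector_derivative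
       c * of_real x powr (c - 1) * G (of_real x * z) + of_real x powr c * (deriv G (of_real x * z) * z)) (at x)"
      by (simp add: algebra_simps)
  qed auto
  then have h1: "((\<lambda>s. c * (of_real s powr (c - 1) * G (of_real s * z)) + z * (of_real s powr (c + 1 - 1) * deriv G (of_real s * z)))
     has_integral G z) {0..1}"
    using c by (simp add: algebra_simps)
  have i1: "(\<lambda>s::real. of_real s powr (c - 1) * G (of_real s * z)) integrable_on {0..1}"
    by (rule Iop_integrable[OF c hG z])
  have c1: "Re (c + 1) > 0" using c by simp
  have i2: "(\<lambda>s::real. of_real s powr (c + 1 - 1) * deriv G (of_real s * z)) integrable_on {0..1}"
    by (rule Iop_integrable[OF c1 hdG z])
  have h2: "((\<lambda>s. c * (of_real s powr (c - 1) * G (of_real s * z)) + z * (of_real s powr (c + 1 - 1) * deriv G (of_real s * z)))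
     has_integral (c * Iop c G z + z * Iop (c + 1) (deriv G) z)) {0..1}"
    unfolding Iop_def
    by (intro has_integral_add has_integral_mult_right integrable_integral i1 i2)
  from has_integral_unique[OF h1 h2] show ?thesis by (simp add: add.commute)
qed

lemma Iop_at0:
  assumes c: "Re c > 0"
  shows "Iop c G 0 = G 0 / c"
proof -
  have "((\<lambda>s::real. of_real s powr (c - 1) * G 0) has_integral (1 / c) * G 0) {0..1}"
    by (rule has_integral_mult_left[OF powr_has_integral[OF c]])
  then have "integral {0..1} (\<lambda>s::real. of_real s powr (c - 1) * G 0) = 1 / c * G 0" by (rule integral_unique)
  moreover have "Iop c G 0 = integral {0..1} (\<lambda>s::real. of_real s powr (c - 1) * G 0)"
    by (simp only: Iop_def mult_zero_right)
  ultimately show ?thesis by (simp only: divide_inverse mult_1 mult.commute)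
qed



lemma first_violation:
  fixes u :: "complex \<Rightarrow> real"
  assumes cont: "continuous_on unit_disk u" and u0: "u 0 < d"
    and z1: "z1 \<in> unit_disk" and uz1: "u z1 \<ge> d"
  shows "\<exists>z0\<in>unit_disk. z0 \<noteq> 0 \<and> u z0 = d \<and> (\<forall>z. norm z \<le> norm z0 \<longrightarrow> u z \<le> d)"
proof -
  have cb: "cball 0 (norm z1) \<subseteq> unit_disk" using z1 by (auto simp: ud_iff)
  define K where "K = {z \<in> cball 0 (norm z1). d \<le> u z}"
  have contK: "continuous_on (cball 0 (norm z1)) u" using cont cb continuous_on_subset by blast
  have "closed K" unfolding K_def
    by (rule continuous_on_closed_Collect_le[OF continuous_on_const contK closed_cball])
  have KK: "K = cball 0 (norm z1) \<inter> K" by (auto simp: K_def)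
  have cK: "compact K" by (subst KK) (rule compact_Int_closed[OF compact_cball \<open>closed K\<close>])
  have nK: "K \<noteq> {}" using z1 uz1 by (auto simp: K_def)
  have ctK: "continuous_on K norm" by (intro continuous_intros)
  obtain z0 where z0K: "z0 \<in> K" and z0min: "\<And>y. y \<in> K \<Longrightarrow> norm z0 \<le> norm y"
    using continuous_attains_inf[OF cK nK ctK] by blast
  have z0d: "u z0 \<ge> d" and z0n: "norm z0 \<le> norm z1" using z0K by (auto simp: K_def)
  have z0D: "z0 \<in> unit_disk" using z0K cb by (auto simp: K_def)
  have z0nz: "z0 \<noteq> 0" using z0d u0 by auto
  have lt: "u z < d" if "norm z < norm z0" for z
  proof (rule ccontr)
    assume "\<not> u z < d"
    then have "z \<in> K" using that z0n by (auto simp: K_def)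
    then show False using z0min that by force
  qed
  have le: "u z \<le> d" if zn: "norm z \<le> norm z0" for z
  proof (cases "norm z < norm z0")
    case True then show ?thesis using lt by force
  next
    case False
    with zn have eqn: "norm z = norm z0" by simp
    then have znz: "z \<noteq> 0" using z0nz by auto
    have zD: "z \<in> unit_disk" using eqn z0D by (simp add: ud_iff)
    show ?thesis
    proof (rule ccontr)
      assume "\<not> u z \<le> d"
      then have pos: "u z - d > 0" by simp
      from cont zD have "continuous (at z) u"
        by (simp add: continuous_on_eq_continuous_at)
      then obtain \<delta> where \<delta>: "\<delta> > 0" "\<And>y. dist y z < \<delta> \<Longrightarrow> dist (u y) (u z) < u z - d"
        using pos unfolding continuous_at_eps_delta by blast
      define t where "t = min (1/2) (\<delta> / (2 * norm z))"
      have t: "t > 0" "t \<le> 1/2" using \<delta> znz by (auto simp: t_def)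
      have "t * norm z \<le> \<delta> / (2 * norm z) * norm z"
        using znz by (intro mult_right_mono) (auto simp: t_def)
      also have "\<dots> = \<delta> / 2" using znz by simp
      finally have tn: "t * norm z < \<delta>" using \<delta> by simp
      define y where "y = of_real (1 - t) * z"
      have "y - z = - (of_real t * z)" by (simp add: y_def algebra_simps)
      then have "dist y z = norm (of_real t * z)" by (simp add: dist_norm)
      also have "\<dots> = \<bar>t\<bar> * norm z" by (simp only: norm_mult norm_of_real)
      finally have "dist y z = t * norm z" using t by simp
      then have "dist (u y) (u z) < u z - d" using \<delta> tn by auto
      then have "u y > d" by (simp add: dist_real_def abs_if split: if_splits)
      moreover have "norm y < norm z0"
      proof -
        have "norm y = \<bar>1 - t\<bar> * norm z" unfolding y_def by (simp only: norm_mult norm_of_real)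
        then have "norm y = (1 - t) * norm z" using t by simp
        also have "\<dots> < norm z" using t znz by simp
        finally show ?thesis using eqn by simp
      qed
      ultimately show False using lt by force
    qed
  qed
  have "u z0 = d" using le[of z0] z0d by simp
  then show ?thesis using z0D z0nz le by blast
qed

lemma max_deriv:
  assumes hol: "F holomorphic_on unit_disk" and z0: "z0 \<in> unit_disk"
    and mx: "\<forall>z. norm z \<le> norm z0 \<longrightarrow> Re (F z) \<le> Re (F z0)"
  shows "Im (z0 * deriv F z0) = 0 \<and> Re (z0 * deriv F z0) \<ge> 0"
proof -
  have dF: "(F has_field_derivative deriv F z0) (at z0)"
    using hol z0 by (meson holomorphic_derivI ud_open)
  have "((\<lambda>w. F (w * z0)) has_field_derivative deriv F z0 * z0) (at 1)"
  proof -
    have "((\<lambda>w. w * z0) has_field_derivative 1 * z0) (at 1)"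
      by (rule DERIV_cmult_right[OF DERIV_ident])
    then have dw: "((\<lambda>w. w * z0) has_field_derivative z0) (at 1)" by simp
    have dF1: "(F has_field_derivative deriv F z0) (at (1 * z0))" using dF by simp
    show ?thesis by (rule DERIV_chain2[where f=F and g="\<lambda>w. w*z0" and x=1 and s=UNIV, OF dF1 dw])
  qed
  then have "((\<lambda>t::real. F (of_real t * z0)) has_vector_derivative deriv F z0 * z0) (at 1)"
    using has_vector_derivative_real_field[of "\<lambda>w. F (w * z0)" _ 1 UNIV] by simp
  then have "((\<lambda>t::real. Re (F (of_real t * z0))) has_vector_derivative Re (deriv F z0 * z0)) (at 1)"
    by (rule bounded_linear.has_vector_derivative[OF bounded_linear_Re])
  then have dr: "DERIV (\<lambda>t::real. Re (F (of_real t * z0))) 1 :> Re (z0 * deriv F z0)"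
    by (simp add: has_real_derivative_iff_has_vector_derivative mult.commute)
  have re: "Re (z0 * deriv F z0) \<ge> 0"
  proof (rule ccontr)
    assume "\<not> ?thesis"
    then have "Re (z0 * deriv F z0) < 0" by simp
    from DERIV_neg_dec_left[OF dr this] obtain e where e: "e > 0"
      "\<And>h. h > 0 \<Longrightarrow> h < e \<Longrightarrow> Re (F (of_real 1 * z0)) < Re (F (of_real (1 - h) * z0))" by blast
    define h where "h = min (e/2) (1/2)"
    have h: "h > 0" "h < e" "h \<le> 1/2" using e by (auto simp: h_def)
    have "norm (of_real (1 - h) * z0) = \<bar>1 - h\<bar> * norm z0" by (simp only: norm_mult norm_of_real)
    also have "\<dots> \<le> norm z0" using h by (simp add: mult_left_le_one_le)
    finally have "norm (of_real (1 - h) * z0) \<le> norm z0" .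
    then have B: "Re (F (of_real (1 - h) * z0)) \<le> Re (F z0)" using mx by blast
    have A: "Re (F (of_real 1 * z0)) < Re (F (of_real (1 - h) * z0))" using e(2)[OF h(1,2)] .
    then have "Re (F z0) < Re (F (of_real (1 - h) * z0))" by (simp only: of_real_1 mult_1)
    with B show False by linarith
  qed
  have "((\<lambda>w. F (exp (\<i> * w) * z0)) has_field_derivative deriv F z0 * (\<i> * z0)) (at 0)"
  proof -
    have d1: "((\<lambda>w. \<i> * w) has_field_derivative \<i> * 1) (at 0)"
      by (rule DERIV_cmult[OF DERIV_ident])
    have "((\<lambda>w. exp (\<i> * w) * z0) has_field_derivative exp (\<i> * 0) * (\<i> * 1) * z0) (at 0)"
      by (rule DERIV_cmult_right[OF DERIV_chain2[OF DERIV_exp d1]])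
    then have dw: "((\<lambda>w. exp (\<i> * w) * z0) has_field_derivative \<i> * z0) (at 0)" by simp
    have dF1: "(F has_field_derivative deriv F z0) (at (exp (\<i> * 0) * z0))" using dF by simp
    show ?thesis by (rule DERIV_chain2[where f=F and g="\<lambda>w. exp (\<i> * w) * z0" and x=0 and s=UNIV, OF dF1 dw])
  qed
  then have "((\<lambda>t::real. F (exp (\<i> * of_real t) * z0)) has_vector_derivative deriv F z0 * (\<i> * z0)) (at 0)"
    using has_vector_derivative_real_field[of "\<lambda>w. F (exp (\<i> * w) * z0)" _ 0 UNIV] by simp
  then have "((\<lambda>t::real. Re (F (exp (\<i> * of_real t) * z0))) has_vector_derivative Re (deriv F z0 * (\<i> * z0))) (at 0)"
    by (rule bounded_linear.has_vector_derivative[OF bounded_linear_Re])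
  then have dt: "DERIV (\<lambda>t::real. Re (F (exp (\<i> * of_real t) * z0))) 0 :> Re (deriv F z0 * (\<i> * z0))"
    by (simp add: has_real_derivative_iff_has_vector_derivative)
  have "Re (deriv F z0 * (\<i> * z0)) = 0"
  proof (rule DERIV_local_max[OF dt, of 1])
    show "\<forall>y. \<bar>0 - y\<bar> < 1 \<longrightarrow> Re (F (exp (\<i> * of_real y) * z0)) \<le> Re (F (exp (\<i> * of_real 0) * z0))"
    proof (intro allI impI)
      fix y :: real
      have "norm (exp (\<i> * of_real y) * z0) = norm z0" by (simp add: norm_mult)
      then show "Re (F (exp (\<i> * of_real y) * z0)) \<le> Re (F (exp (\<i> * of_real 0) * z0))"
        using mx by simp
    qed
  qed simp
  then have "Im (z0 * deriv F z0) = 0" by (simp add: algebra_simps)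
  with re show ?thesis by simp
qed



lemma flat_branch_pow:
  assumes hq: "q holomorphic_on unit_disk" and nz: "\<forall>z\<in>unit_disk. q z \<noteq> 0"
    and fl: "flatn n q" and n: "n \<ge> 1"
  shows "flatn n (branch_pow q c)"
proof -
  define A where "A = (\<lambda>z. c * (deriv q z / q z))"
  have hdq: "deriv q holomorphic_on unit_disk" using hq by (intro holomorphic_deriv) auto
  have hA: "A holomorphic_on unit_disk" unfolding A_def
    by (rule holomorphic_on_mult[OF holomorphic_on_const holomorphic_on_divide[OF hdq hq]]) (use nz in auto)
  have hE: "branch_pow q c holomorphic_on unit_disk" by (rule branch_pow_holo[OF hq nz])
  have eq: "deriv (branch_pow q c) z = A z * branch_pow q c z" if "z \<in> unit_disk" for z
    using DERIV_imp_deriv[OF branch_pow_deriv[OF hq nz that]] by (simp add: A_def)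
  have hW: "(\<lambda>z. c * deriv q z) holomorphic_on unit_disk" by (rule holomorphic_on_mult[OF holomorphic_on_const hdq])
  have A0: "\<forall>i<n - 1. (deriv ^^ i) A 0 = 0"
  proof (rule div_lemma[OF hA hq hW])
    show "\<And>z. z \<in> unit_disk \<Longrightarrow> A z * q z = c * deriv q z" using nz by (auto simp: A_def)
    show "q 0 \<noteq> 0" using nz by simp
    show "\<forall>i<n - 1. (deriv ^^ i) (\<lambda>z. c * deriv q z) 0 = 0"
    proof (intro allI impI)
      fix i assume i: "i < n - 1"
      have "(deriv ^^ i) (\<lambda>z. c * deriv q z) 0 = c * (deriv ^^ i) (deriv q) 0"
        by (rule higher_deriv_cmult[OF hdq ud_0 ud_open])
      also have "(deriv ^^ i) (deriv q) 0 = (deriv ^^ Suc i) q 0" by (rule higher_deriv_Suc'[symmetric])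
      also have "\<dots> = 0" using fl i by (auto simp: flatn_def simp del: funpow.simps)
      finally show "(deriv ^^ i) (\<lambda>z. c * deriv q z) 0 = 0" by simp
    qed
  qed
  have "flatn (Suc (n - 1)) (branch_pow q c)" by (rule exp_lemma[OF hA hE eq A0])
  then show ?thesis using n by simp
qed

lemma Iop_higher:
  assumes "Re c > 0" "G holomorphic_on unit_disk" "z \<in> unit_disk"
  shows "(deriv ^^ k) (Iop c G) z = Iop (c + of_nat k) ((deriv ^^ k) G) z"
  using assms
proof (induction k arbitrary: c G z)
  case 0 then show ?case by simp
next
  case (Suc k)
  have c1: "Re (c + 1) > 0" using Suc.prems by simp
  have hdG: "deriv G holomorphic_on unit_disk" using Suc.prems by (intro holomorphic_deriv) auto
  have h1: "deriv (Iop c G) holomorphic_on unit_disk"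
    using Iop_holo[OF Suc.prems(1,2)] by (intro holomorphic_deriv) auto
  have h2: "Iop (c + 1) (deriv G) holomorphic_on unit_disk" by (rule Iop_holo[OF c1 hdG])
  have "(deriv ^^ Suc k) (Iop c G) z = (deriv ^^ k) (deriv (Iop c G)) z" by (rule higher_deriv_Suc')
  also have "\<dots> = (deriv ^^ k) (Iop (c + 1) (deriv G)) z"
    by (rule higher_deriv_transform_within_open[OF h1 h2 ud_open Suc.prems(3)])
       (rule DERIV_imp_deriv[OF Iop_deriv[OF Suc.prems(1,2)]])
  also have "\<dots> = Iop (c + 1 + of_nat k) ((deriv ^^ k) (deriv G)) z"
    by (rule Suc.IH[OF c1 hdG Suc.prems(3)])
  also have "(deriv ^^ k) (deriv G) = (deriv ^^ Suc k) G"
    by (simp add: funpow_Suc_right del: funpow.simps)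
  also have "c + 1 + of_nat k = c + of_nat (Suc k)" by simp
  finally show ?case .
qed

lemma p_positive:
  assumes hp: "p holomorphic_on unit_disk" and p0: "Re (p 0) > 0"
    and H: "\<forall>z\<in>unit_disk. Re (H0 z) > 0"
    and ode: "\<forall>z\<in>unit_disk. z * deriv p z = 1 - H0 z * p z"
  shows "\<forall>z\<in>unit_disk. Re (p z) > 0"
proof (rule ccontr)
  assume "\<not> ?thesis"
  then obtain z1 where z1: "z1 \<in> unit_disk" "Re (p z1) \<le> 0" by (auto simp: not_less)
  have cont: "continuous_on unit_disk (\<lambda>z. - Re (p z))"
    using hp holomorphic_on_imp_continuous_on by (intro continuous_intros) auto
  obtain z0 where z0: "z0 \<in> unit_disk" "z0 \<noteq> 0" "- Re (p z0) = 0"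
      and le: "\<forall>z. norm z \<le> norm z0 \<longrightarrow> - Re (p z) \<le> 0"
    using first_violation[OF cont, of 0 z1] p0 z1 by auto
  have hmp: "(\<lambda>z. - p z) holomorphic_on unit_disk" using hp by (intro holomorphic_intros)
  have "Im (z0 * deriv (\<lambda>z. - p z) z0) = 0 \<and> Re (z0 * deriv (\<lambda>z. - p z) z0) \<ge> 0"
    by (rule max_deriv[OF hmp z0(1)]) (use le z0 in auto)
  moreover have "deriv (\<lambda>z. - p z) z0 = - deriv p z0"
  proof -
    have "(p has_field_derivative deriv p z0) (at z0)"
      using hp z0 by (meson holomorphic_derivI ud_open)
    from DERIV_imp_deriv[OF DERIV_minus[OF this]] show ?thesis .
  qed
  ultimately have A: "Im (z0 * deriv p z0) = 0" "Re (z0 * deriv p z0) \<le> 0" by auto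
  have E: "z0 * deriv p z0 = 1 - H0 z0 * p z0" using ode z0 by auto
  have rp: "Re (p z0) = 0" using z0 by simp
  have a: "Re (H0 z0) > 0" using H z0 by auto
  from A(1) E rp have "Re (H0 z0) * Im (p z0) = 0" by simp
  with a have ip: "Im (p z0) = 0" by simp
  from A(2) E rp ip show False by simp
qed

lemma sub_halfplane:
  assumes hP: "P holomorphic_on unit_disk" and pos: "\<forall>z\<in>unit_disk. Re (p z) > 0"
    and rel: "\<forall>z\<in>unit_disk. k z = P z + p z * (z * deriv P z)"
    and om: "\<forall>z\<in>unit_disk. Re (cnj a * k z) < b" and P0: "Re (cnj a * P 0) < b"
  shows "\<forall>z\<in>unit_disk. Re (cnj a * P z) < b"
proof (rule ccontr)
  assume "\<not> ?thesis"
  then obtain z1 where z1: "z1 \<in> unit_disk" "Re (cnj a * P z1) \<ge> b" by (auto simp: not_less)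
  have cont: "continuous_on unit_disk (\<lambda>z. Re (cnj a * P z))"
    using hP holomorphic_on_imp_continuous_on by (intro continuous_intros) auto
  obtain z0 where z0: "z0 \<in> unit_disk" "z0 \<noteq> 0" "Re (cnj a * P z0) = b"
      and le: "\<forall>z. norm z \<le> norm z0 \<longrightarrow> Re (cnj a * P z) \<le> b"
    using first_violation[OF cont P0 z1] by auto
  have haP: "(\<lambda>z. cnj a * P z) holomorphic_on unit_disk" using hP by (intro holomorphic_intros)
  have M: "Im (z0 * deriv (\<lambda>z. cnj a * P z) z0) = 0 \<and> Re (z0 * deriv (\<lambda>z. cnj a * P z) z0) \<ge> 0"
    by (rule max_deriv[OF haP z0(1)]) (use le z0 in auto)
  have "deriv (\<lambda>z. cnj a * P z) z0 = cnj a * deriv P z0"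
  proof -
    have "(P has_field_derivative deriv P z0) (at z0)"
      using hP z0 by (meson holomorphic_derivI ud_open)
    from DERIV_imp_deriv[OF DERIV_cmult[OF this]] show ?thesis .
  qed
  define m where "m = z0 * (cnj a * deriv P z0)"
  have m: "Im m = 0" "Re m \<ge> 0" using M \<open>deriv (\<lambda>z. cnj a * P z) z0 = cnj a * deriv P z0\<close>
    by (auto simp: m_def)
  have "cnj a * k z0 = cnj a * P z0 + p z0 * m" using rel z0 by (simp add: m_def algebra_simps)
  then have "Re (cnj a * k z0) = b + (Re (p z0) * Re m - Im (p z0) * Im m)" using z0 by simp
  also have "\<dots> \<ge> b"
  proof -
    have "Re (p z0) > 0" using pos z0 by auto
    then have "Re (p z0) * Re m \<ge> 0" using m by simp
    then show ?thesis using m by simp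
  qed
  finally show False using om z0 by auto
qed

lemma inner_cnj: "inner a (y::complex) = Re (cnj a * y)"
  by (simp add: inner_complex_def)

lemma sub_convex:
  assumes hh: "h holomorphic_on unit_disk" and inj: "inj_on h unit_disk" and cvx: "convex (h ` unit_disk)"
    and hP: "P holomorphic_on unit_disk" and P0: "P 0 = h 0"
    and pos: "\<forall>z\<in>unit_disk. Re (p z) > 0"
    and rel: "\<forall>z\<in>unit_disk. k z = P z + p z * (z * deriv P z)"
    and kin: "\<forall>z\<in>unit_disk. k z \<in> h ` unit_disk"
  shows "\<forall>z\<in>unit_disk. P z \<in> h ` unit_disk"
proof (rule ccontr)
  assume "\<not> ?thesis"
  then obtain z1 where z1: "z1 \<in> unit_disk" "P z1 \<notin> h ` unit_disk" by auto
  have op: "open (h ` unit_disk)" by (rule open_mapping_thm3[OF hh ud_open inj])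
  obtain a b where ab: "a \<noteq> 0" "\<forall>x\<in>h ` unit_disk. inner a x \<le> b" "\<forall>x\<in>{P z1}. inner a x \<ge> b"
    using separating_hyperplane_sets[OF cvx convex_singleton, of "P z1"] z1 by auto
  have strict: "inner a y < b" if y: "y \<in> h ` unit_disk" for y
  proof -
    obtain e where e: "e > 0" "ball y e \<subseteq> h ` unit_disk" using op y open_contains_ball by blast
    define t where "t = e / (2 * norm a)"
    have t: "t > 0" using e ab by (simp add: t_def)
    have "norm (of_real t * a) = \<bar>t\<bar> * norm a" by (simp only: norm_mult norm_of_real)
    also have "\<dots> = e / 2" using ab e t by (simp add: t_def)
    finally have "norm (of_real t * a) = e / 2" .
    then have "y + of_real t * a \<in> ball y e" using e by (simp add: dist_norm)
    then have le_b: "inner a (y + of_real t * a) \<le> b" using ab e by blast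
    have n2: "cmod a * cmod a = Re a * Re a + Im a * Im a" by (metis cmod_power2 power2_eq_square)
    have "inner a (y + of_real t * a) = inner a y + t * (norm a)^2"
      by (simp add: inner_add_right inner_cnj algebra_simps power2_eq_square n2)
    moreover have "t * (norm a)^2 > 0" using t ab by simp
    ultimately show ?thesis using le_b by linarith
  qed
  have "\<forall>z\<in>unit_disk. Re (cnj a * P z) < b"
  proof (rule sub_halfplane[OF hP pos rel])
    show "\<forall>z\<in>unit_disk. Re (cnj a * k z) < b" using kin strict by (auto simp: inner_cnj)
    show "Re (cnj a * P 0) < b" using strict[of "h 0"] P0 by (auto simp: inner_cnj)
  qed
  moreover have "Re (cnj a * P z1) \<ge> b" using ab(3) by (simp add: inner_cnj)
  ultimately show False using z1 by force
qed

lemma subord_from_image: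
  assumes hh: "h holomorphic_on unit_disk" and inj: "inj_on h unit_disk"
    and hP: "P holomorphic_on unit_disk" and P0: "P 0 = h 0"
    and img: "\<forall>z\<in>unit_disk. P z \<in> h ` unit_disk"
  shows "subordinate P h"
proof -
  obtain g where hg: "g holomorphic_on (h ` unit_disk)"
      and "\<And>z. z \<in> unit_disk \<Longrightarrow> deriv h z * deriv g (h z) = 1"
      and gh: "\<And>z. z \<in> unit_disk \<Longrightarrow> g (h z) = z"
    by (rule holomorphic_has_inverse[OF hh ud_open inj]) blast
  have sub: "P ` unit_disk \<subseteq> h ` unit_disk" using img by blast
  have hgP: "(g \<circ> P) holomorphic_on unit_disk"
    by (rule holomorphic_on_compose_gen[OF hP hg sub])
  have props: "(g \<circ> P) z \<in> unit_disk \<and> P z = h ((g \<circ> P) z)" if "z \<in> unit_disk" for z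
  proof -
    have "P z \<in> h ` unit_disk" using img that by (rule bspec)
    then obtain y where y: "y \<in> unit_disk" "P z = h y" by (rule imageE) (rule that, simp_all)
    have "g (P z) = y" using gh y by simp
    then show ?thesis using y by simp
  qed
  have g0: "(g \<circ> P) 0 = 0" using gh P0 by simp
  have im: "(g \<circ> P) ` unit_disk \<subseteq> unit_disk" using props by blast
  have eqs: "\<forall>z\<in>unit_disk. P z = h ((g \<circ> P) z)" using props by blast
  show ?thesis unfolding subordinate_def
    using hgP im g0 eqs by blast
qed



theorem mainTheorem6:
  fixes n :: nat and f g \<phi> h :: "complex \<Rightarrow> complex" and \<beta> \<alpha> \<sigma> :: complex
  assumes "n \<ge> 1"
    and "class_A n f" and "class_A n g"
    and "\<forall>z\<in>unit_disk - {0}. f z \<noteq> 0 \<and> g z \<noteq> 0"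
    and "class_H1 n \<phi>" and "\<phi> 0 = 1" and "\<forall>z\<in>unit_disk. \<phi> z \<noteq> 0"
    and "convex_function h" and "h 0 = 1"
    and "\<beta> \<noteq> 0"
    and "\<forall>z\<in>unit_disk. Re (\<beta> * h z + \<alpha>) > 0"
    and "subordinate (\<lambda>z. \<beta> * (deriv f z / divz f z) + \<sigma> * (deriv g z / divz g z))
                     (\<lambda>z. \<beta> * h z + \<sigma>)"
  shows "class_A n (F_op \<beta> \<alpha> \<sigma> f g \<phi>) \<and>
    subordinate (\<lambda>z. deriv (F_op \<beta> \<alpha> \<sigma> f g \<phi>) z / divz (F_op \<beta> \<alpha> \<sigma> f g \<phi>) z
                     + (1 / \<beta>) * (z * deriv \<phi> z / \<phi> z)) h"
proof -
  note n1 = assms(1)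
  have hf: "f holomorphic_on unit_disk" and f0: "f 0 = 0" and f1: "deriv f 0 = 1"
    using assms(2) by (auto simp: class_A_def)
  have hg: "g holomorphic_on unit_disk" and g0: "g 0 = 0" and g1: "deriv g 0 = 1"
    using assms(3) by (auto simp: class_A_def)
  have fnz: "\<forall>z\<in>unit_disk - {0}. f z \<noteq> 0" and gnz: "\<forall>z\<in>unit_disk - {0}. g z \<noteq> 0"
    using assms(4) by auto
  have h\<phi>: "\<phi> holomorphic_on unit_disk" and fl\<phi>: "flatn n \<phi>"
    using assms(5) by (auto simp: class_H1_def flatn_def)
  note \<phi>0 = assms(6) and \<phi>nz = assms(7)
  have hh: "h holomorphic_on unit_disk" and injh: "inj_on h unit_disk" and cvxh: "convex (h ` unit_disk)"
    using assms(8) by (auto simp: convex_function_def)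
  note h0 = assms(9) and \<beta>0 = assms(10) and Reh = assms(11)
  obtain \<omega> where h\<omega>: "\<omega> holomorphic_on unit_disk" and \<omega>D: "\<omega> ` unit_disk \<subseteq> unit_disk"
      and \<omega>0: "\<omega> 0 = 0"
      and eq\<omega>: "\<forall>z\<in>unit_disk. \<beta> * (deriv f z / divz f z) + \<sigma> * (deriv g z / divz g z) = \<beta> * h (\<omega> z) + \<sigma>"
    using assms(12) unfolding subordinate_def by blast

  define c where "c = \<beta> + \<alpha>"
  have cpos: "Re c > 0" using bspec[OF Reh ud_0] h0 by (simp add: c_def)
  have c0: "c \<noteq> 0" using cpos by auto

  define df where "df = divz f"
  define dg where "dg = divz g"
  have hdf: "df holomorphic_on unit_disk" unfolding df_def by (rule divz_holo[OF hf f0])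
  have hdg: "dg holomorphic_on unit_disk" unfolding dg_def by (rule divz_holo[OF hg g0])
  have nzdf: "\<forall>z\<in>unit_disk. df z \<noteq> 0" unfolding df_def using divz_nz[OF f1 fnz] by blast
  have nzdg: "\<forall>z\<in>unit_disk. dg z \<noteq> 0" unfolding dg_def using divz_nz[OF g1 gnz] by blast
  have df0: "df 0 = 1" by (simp add: df_def divz_0 f1)
  have dg0: "dg 0 = 1" by (simp add: dg_def divz_0 g1)

  define Pf where "Pf = branch_pow df \<beta>"
  define Pg where "Pg = branch_pow dg \<sigma>"
  define \<Phi> where "\<Phi> = (\<lambda>t. Pf t * Pg t)"
  have hPf: "Pf holomorphic_on unit_disk" unfolding Pf_def by (rule branch_pow_holo[OF hdf nzdf])
  have hPg: "Pg holomorphic_on unit_disk" unfolding Pg_def by (rule branch_pow_holo[OF hdg nzdg])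
  have h\<Phi>: "\<Phi> holomorphic_on unit_disk" unfolding \<Phi>_def by (rule holomorphic_on_mult[OF hPf hPg])
  have \<Phi>nz: "\<Phi> t \<noteq> 0" for t by (simp add: \<Phi>_def Pf_def Pg_def branch_pow_nz)
  have \<Phi>0: "\<Phi> 0 = 1" by (simp add: \<Phi>_def Pf_def Pg_def)

  define k where "k = (\<lambda>t. h (\<omega> t))"
  have hk: "k holomorphic_on unit_disk"
  proof -
    have "(h \<circ> \<omega>) holomorphic_on unit_disk" by (rule holomorphic_on_compose_gen[OF h\<omega> hh \<omega>D])
    then show ?thesis by (simp add: k_def o_def)
  qed
  have kin: "\<forall>t\<in>unit_disk. k t \<in> h ` unit_disk"
  proof
    fix t assume "t \<in> unit_disk"
    then have "\<omega> t \<in> unit_disk" using \<omega>D by blast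
    then show "k t \<in> h ` unit_disk" unfolding k_def by (rule imageI)
  qed
  have k0: "k 0 = 1" by (simp add: k_def \<omega>0 h0)

  have d\<Phi>: "deriv \<Phi> t = (\<beta> * (deriv df t / df t) + \<sigma> * (deriv dg t / dg t)) * \<Phi> t" if t: "t \<in> unit_disk" for t
  proof -
    have "(\<Phi> has_field_derivative (\<beta> * (deriv df t / df t) * Pf t) * Pg t + (\<sigma> * (deriv dg t / dg t) * Pg t) * Pf t) (at t)"
      unfolding \<Phi>_def Pf_def Pg_def
      by (rule DERIV_mult[OF branch_pow_deriv[OF hdf nzdf t] branch_pow_deriv[OF hdg nzdg t]])
    from DERIV_imp_deriv[OF this] show ?thesis by (simp add: \<Phi>_def algebra_simps)
  qed
  have K\<Phi>: "t * deriv \<Phi> t = \<beta> * (k t - 1) * \<Phi> t" if t: "t \<in> unit_disk" for t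
  proof (cases "t = 0")
    case True then show ?thesis by (simp add: k0)
  next
    case False
    have ft: "f t \<noteq> 0" and gt: "g t \<noteq> 0" using fnz gnz t False by auto
    have r1: "t * (deriv df t / df t) = deriv f t / divz f t - 1"
      using False ft by (simp add: df_def divz_deriv[OF hf f0 t False] divz_eq field_simps power2_eq_square)
    have r2: "t * (deriv dg t / dg t) = deriv g t / divz g t - 1"
      using False gt by (simp add: dg_def divz_deriv[OF hg g0 t False] divz_eq field_simps power2_eq_square)
    have "t * deriv \<Phi> t = (\<beta> * (t * (deriv df t / df t)) + \<sigma> * (t * (deriv dg t / dg t))) * \<Phi> t"
      using d\<Phi>[OF t] by (simp add: algebra_simps)
    also have "\<dots> = (\<beta> * (deriv f t / divz f t) + \<sigma> * (deriv g t / divz g t) - \<beta> - \<sigma>) * \<Phi> t"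
      unfolding r1 r2 by (simp add: algebra_simps)
    also have "\<dots> = \<beta> * (k t - 1) * \<Phi> t"
      using eq\<omega> t by (simp add: k_def algebra_simps)
    finally show ?thesis .
  qed

  define I where "I = Iop c \<Phi>"
  define J where "J = (\<lambda>z. c * I z)"
  have hI: "I holomorphic_on unit_disk" unfolding I_def by (rule Iop_holo[OF cpos h\<Phi>])
  have hJ: "J holomorphic_on unit_disk" unfolding J_def by (rule holomorphic_on_mult[OF holomorphic_on_const hI])
  have J0: "J 0 = 1" using c0 by (simp add: J_def I_def Iop_at0[OF cpos] \<Phi>0)
  have dJ: "deriv J z = c * Iop (c + 1) (deriv \<Phi>) z" if z: "z \<in> unit_disk" for z
    unfolding J_def I_def by (rule DERIV_imp_deriv[OF DERIV_cmult[OF Iop_deriv[OF cpos h\<Phi> z]]])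
  have zJ: "z * deriv J z = c * (\<Phi> z - J z)" if z: "z \<in> unit_disk" for z
  proof -
    have E: "z * Iop (c + 1) (deriv \<Phi>) z + c * I z = \<Phi> z" unfolding I_def by (rule Iop_FTC[OF cpos h\<Phi> z])
    then have E': "z * Iop (c + 1) (deriv \<Phi>) z = \<Phi> z - c * I z" by (simp add: eq_diff_eq)
    have "z * deriv J z = c * (z * Iop (c + 1) (deriv \<Phi>) z)" by (simp add: dJ[OF z])
    also have "\<dots> = c * (\<Phi> z - J z)" by (simp add: E' J_def)
    finally show ?thesis .
  qed

  define p where "p = (\<lambda>z. J z / (c * \<Phi> z))"
  have hc\<Phi>: "(\<lambda>z. c * \<Phi> z) holomorphic_on unit_disk" by (rule holomorphic_on_mult[OF holomorphic_on_const h\<Phi>])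
  have hp: "p holomorphic_on unit_disk" unfolding p_def
    by (rule holomorphic_on_divide[OF hJ hc\<Phi>]) (use c0 \<Phi>nz in auto)
  have p0: "p 0 = 1 / c" by (simp add: p_def J0 \<Phi>0)
  have Rep0: "Re (p 0) > 0" using cpos by (simp add: p0 Re_complex_div_gt_0)
  have dp: "deriv p z = (deriv J z * (c * \<Phi> z) - J z * (c * deriv \<Phi> z)) / (c * \<Phi> z)^2"
    if z: "z \<in> unit_disk" for z
  proof -
    have dJz: "(J has_field_derivative deriv J z) (at z)" using hJ z by (meson holomorphic_derivI ud_open)
    have d\<Phi>z: "(\<Phi> has_field_derivative deriv \<Phi> z) (at z)" using h\<Phi> z by (meson holomorphic_derivI ud_open)
    have "(p has_field_derivative (deriv J z * (c * \<Phi> z) - J z * (c * deriv \<Phi> z)) / ((c * \<Phi> z) * (c * \<Phi> z))) (at z)"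
      unfolding p_def by (rule DERIV_divide[OF dJz DERIV_cmult[OF d\<Phi>z]]) (use c0 \<Phi>nz in auto)
    from DERIV_imp_deriv[OF this] show ?thesis by (simp add: power2_eq_square)
  qed
  have ode: "\<forall>z\<in>unit_disk. z * deriv p z = 1 - (\<beta> * k z + \<alpha>) * p z"
  proof
    fix z assume z: "z \<in> unit_disk"
    have "z * deriv p z = (c * (z * deriv J z) * \<Phi> z - c * J z * (z * deriv \<Phi> z)) / (c * \<Phi> z)^2"
      using dp[OF z] by (simp add: algebra_simps)
    also have "\<dots> = (c * (c * (\<Phi> z - J z)) * \<Phi> z - c * J z * (\<beta> * (k z - 1) * \<Phi> z)) / (c * \<Phi> z)^2"
      by (simp only: zJ[OF z] K\<Phi>[OF z])
    also have "\<dots> = 1 - (\<beta> * k z + \<alpha>) * p z"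
    proof -
      have \<alpha>c: "\<alpha> = c - \<beta>" by (simp add: c_def)
      show ?thesis using c0 \<Phi>nz[of z] unfolding \<alpha>c p_def by (simp add: field_simps power2_eq_square)
    qed
    finally show "z * deriv p z = 1 - (\<beta> * k z + \<alpha>) * p z" .
  qed
  have H0pos: "\<forall>z\<in>unit_disk. Re (\<beta> * k z + \<alpha>) > 0"
  proof
    fix z assume "z \<in> unit_disk"
    then have "\<omega> z \<in> unit_disk" using \<omega>D by blast
    then show "Re (\<beta> * k z + \<alpha>) > 0" using Reh by (simp add: k_def)
  qed
  have ppos: "\<forall>z\<in>unit_disk. Re (p z) > 0" by (rule p_positive[OF hp Rep0 H0pos ode])
  have pnz: "p z \<noteq> 0" if "z \<in> unit_disk" for z using ppos that by force
  have Jnz: "J z \<noteq> 0" if "z \<in> unit_disk" for z using pnz[OF that] by (simp add: p_def)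

  define Q where "Q = Q_op \<beta> \<alpha> \<sigma> f g \<phi>"
  have Qeq: "Q = (\<lambda>z. J z / \<phi> z)"
  proof
    fix z
    have "Q z = c / \<phi> z * I z"
      unfolding Q_def Q_op_def I_def Iop_def c_def \<Phi>_def Pf_def Pg_def df_def dg_def
      by (simp add: mult.assoc)
    then show "Q z = J z / \<phi> z" by (simp add: J_def)
  qed
  have hQ: "Q holomorphic_on unit_disk" unfolding Qeq
    by (rule holomorphic_on_divide[OF hJ h\<phi>]) (use \<phi>nz in auto)
  have Qnz: "\<forall>z\<in>unit_disk. Q z \<noteq> 0" using Jnz \<phi>nz by (simp add: Qeq)
  have Q0: "Q 0 = 1" by (simp add: Qeq J0 \<phi>0)

  define E where "E = branch_pow Q (1 / \<beta>)"
  define F where "F = F_op \<beta> \<alpha> \<sigma> f g \<phi>"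
  have Feq: "F = (\<lambda>z. z * E z)" by (rule ext) (simp add: F_def F_op_def E_def Q_def)
  have hE: "E holomorphic_on unit_disk" unfolding E_def by (rule branch_pow_holo[OF hQ Qnz])
  have Enz: "E z \<noteq> 0" for z by (simp add: E_def branch_pow_nz)
  have E0: "E 0 = 1" by (simp add: E_def)
  have dE: "deriv E z = 1 / \<beta> * (deriv Q z / Q z) * E z" if "z \<in> unit_disk" for z
    unfolding E_def by (rule DERIV_imp_deriv[OF branch_pow_deriv[OF hQ Qnz that]])
  have dF: "deriv F z = E z + z * deriv E z" if z: "z \<in> unit_disk" for z
  proof -
    have dEz: "(E has_field_derivative deriv E z) (at z)" using hE z by (meson holomorphic_derivI ud_open)
    have "(F has_field_derivative (1 * E z + deriv E z * z)) (at z)"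
      unfolding Feq by (rule DERIV_mult[OF DERIV_ident dEz])
    from DERIV_imp_deriv[OF this] show ?thesis by (simp add: mult.commute)
  qed
  have divzF: "divz F z = E z" if z: "z \<in> unit_disk" for z
  proof (cases "z = 0")
    case True then show ?thesis using dF[OF z] by (simp add: divz_0)
  next
    case False then show ?thesis by (simp add: divz_eq Feq)
  qed
  have hF: "F holomorphic_on unit_disk" unfolding Feq by (rule holomorphic_on_mult[OF holomorphic_on_ident hE])

  define P where "P = (\<lambda>z. (1 / p z - \<alpha>) / \<beta>)"
  have GP: "deriv F z / divz F z + (1 / \<beta>) * (z * deriv \<phi> z / \<phi> z) = P z" if z: "z \<in> unit_disk" for z
  proof -
    have dJz: "(J has_field_derivative deriv J z) (at z)" using hJ z by (meson holomorphic_derivI ud_open)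
    have d\<phi>z: "(\<phi> has_field_derivative deriv \<phi> z) (at z)" using h\<phi> z by (meson holomorphic_derivI ud_open)
    have "(Q has_field_derivative (deriv J z * \<phi> z - J z * deriv \<phi> z) / (\<phi> z * \<phi> z)) (at z)"
      unfolding Qeq by (rule DERIV_divide[OF dJz d\<phi>z]) (use \<phi>nz z in auto)
    then have dQ: "deriv Q z = (deriv J z * \<phi> z - J z * deriv \<phi> z) / (\<phi> z * \<phi> z)"
      by (rule DERIV_imp_deriv)
    have Jz: "J z \<noteq> 0" using Jnz z by auto
    have pz: "z * deriv Q z / Q z = z * deriv J z / J z - z * deriv \<phi> z / \<phi> z"
    proof -
      have Qz: "Q z = J z / \<phi> z" by (simp add: Qeq)
      have "\<phi> z \<noteq> 0" using \<phi>nz z by auto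
      then show ?thesis unfolding dQ Qz using Jz by (simp add: field_simps)
    qed
    have "deriv F z / divz F z = 1 + 1 / \<beta> * (z * deriv Q z / Q z)"
      using Enz[of z] by (simp add: dF[OF z] divzF[OF z] dE[OF z] field_simps)
    also have "\<dots> = 1 + 1 / \<beta> * (c * (\<Phi> z - J z) / J z) - 1 / \<beta> * (z * deriv \<phi> z / \<phi> z)"
      by (simp add: pz zJ[OF z] algebra_simps)
    finally have "deriv F z / divz F z + (1 / \<beta>) * (z * deriv \<phi> z / \<phi> z) = 1 + 1 / \<beta> * (c * (\<Phi> z - J z) / J z)"
      by simp
    also have "\<dots> = P z"
      using Jz \<Phi>nz[of z] \<beta>0 c0 by (simp add: P_def p_def c_def field_simps)
    finally show ?thesis .
  qed
  have hP: "P holomorphic_on unit_disk" unfolding P_def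
  proof (rule holomorphic_on_divide[OF _ holomorphic_on_const])
    show "(\<lambda>z. 1 / p z - \<alpha>) holomorphic_on unit_disk"
      by (rule holomorphic_on_diff[OF holomorphic_on_divide[OF holomorphic_on_const hp] holomorphic_on_const])
         (use pnz in auto)
  qed (use \<beta>0 in auto)
  have P0: "P 0 = h 0" using \<beta>0 by (simp add: P_def p0 h0 c_def)
  have rel: "\<forall>z\<in>unit_disk. k z = P z + p z * (z * deriv P z)"
  proof
    fix z assume z: "z \<in> unit_disk"
    have dpz: "(p has_field_derivative deriv p z) (at z)" using hp z by (meson holomorphic_derivI ud_open)
    have pz: "p z \<noteq> 0" using pnz z by auto
    have d1: "((\<lambda>z. 1::complex) has_field_derivative 0) (at z)" by (rule DERIV_const)
    have "((\<lambda>z. 1 / p z) has_field_derivative (0 * p z - 1 * deriv p z) / (p z * p z)) (at z)"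
      by (rule DERIV_divide[OF d1 dpz pz])
    then have "((\<lambda>z. 1 / p z) has_field_derivative - deriv p z / (p z * p z)) (at z)" by simp
    then have "((\<lambda>z. 1 / p z - \<alpha>) has_field_derivative - deriv p z / (p z * p z) - 0) (at z)"
      by (rule DERIV_diff[OF _ DERIV_const])
    then have "(P has_field_derivative (- deriv p z / (p z * p z) - 0) / \<beta>) (at z)"
      unfolding P_def by (rule DERIV_cdivide)
    then have dP: "deriv P z = - deriv p z / (p z * p z) / \<beta>" by (simp add: DERIV_imp_deriv)
    have "P z + p z * (z * deriv P z) = P z - (z * deriv p z) / (p z * \<beta>)"
      using pz \<beta>0 by (simp add: dP field_simps)
    also have "\<dots> = P z - (1 - (\<beta> * k z + \<alpha>) * p z) / (p z * \<beta>)"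
      using ode z by simp
    also have "\<dots> = k z" using pz \<beta>0 by (simp add: P_def field_simps)
    finally show "k z = P z + p z * (z * deriv P z)" by simp
  qed
  have img: "\<forall>z\<in>unit_disk. P z \<in> h ` unit_disk"
    by (rule sub_convex[OF hh injh cvxh hP P0 ppos rel kin])
  have subP: "subordinate P h" by (rule subord_from_image[OF hh injh hP P0 img])
  have sub: "subordinate (\<lambda>z. deriv F z / divz F z + (1 / \<beta>) * (z * deriv \<phi> z / \<phi> z)) h"
  proof -
    obtain w where w: "w holomorphic_on unit_disk" "w ` unit_disk \<subseteq> unit_disk" "w 0 = 0"
      "\<forall>z\<in>unit_disk. P z = h (w z)"
      using subP unfolding subordinate_def by blast
    have "\<forall>z\<in>unit_disk. deriv F z / divz F z + (1 / \<beta>) * (z * deriv \<phi> z / \<phi> z) = h (w z)"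
      using w(4) GP by simp
    then show ?thesis unfolding subordinate_def using w(1,2,3) by blast
  qed

  have fdf: "flatn n df" unfolding df_def by (rule divz_flat[OF assms(2)])
  have fdg: "flatn n dg" unfolding dg_def by (rule divz_flat[OF assms(3)])
  have fPf: "flatn n Pf" unfolding Pf_def by (rule flat_branch_pow[OF hdf nzdf fdf n1])
  have fPg: "flatn n Pg" unfolding Pg_def by (rule flat_branch_pow[OF hdg nzdg fdg n1])
  have f\<Phi>: "flatn n \<Phi>" unfolding \<Phi>_def by (rule flatn_mult[OF hPf hPg fPf fPg])
  have fJ: "flatn n J" unfolding flatn_def
  proof
    fix i assume i: "i \<in> {1..<n}"
    have ci: "Re (c + of_nat i) > 0" using cpos by simp
    have "(deriv ^^ i) J 0 = c * (deriv ^^ i) I 0"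
      unfolding J_def by (rule higher_deriv_cmult[OF hI ud_0 ud_open])
    also have "(deriv ^^ i) I 0 = Iop (c + of_nat i) ((deriv ^^ i) \<Phi>) 0"
      unfolding I_def by (rule Iop_higher[OF cpos h\<Phi> ud_0])
    also have "\<dots> = (deriv ^^ i) \<Phi> 0 / (c + of_nat i)" by (rule Iop_at0[OF ci])
    also have "(deriv ^^ i) \<Phi> 0 = 0" using f\<Phi> i by (auto simp: flatn_def)
    finally show "(deriv ^^ i) J 0 = 0" by simp
  qed
  have fQ: "flatn n Q"
  proof -
    have hA: "(\<lambda>z. Q z - 1) holomorphic_on unit_disk" by (rule holomorphic_on_diff[OF hQ holomorphic_on_const])
    have hW: "(\<lambda>z. J z - \<phi> z) holomorphic_on unit_disk" by (rule holomorphic_on_diff[OF hJ h\<phi>])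
    have A0: "\<forall>i<n. (deriv ^^ i) (\<lambda>z. Q z - 1) 0 = 0"
    proof (rule div_lemma[OF hA h\<phi> hW])
      show "\<And>z. z \<in> unit_disk \<Longrightarrow> (Q z - 1) * \<phi> z = J z - \<phi> z"
        using \<phi>nz by (simp add: Qeq field_simps)
      show "\<phi> 0 \<noteq> 0" using \<phi>0 by simp
      show "\<forall>i<n. (deriv ^^ i) (\<lambda>z. J z - \<phi> z) 0 = 0"
      proof (intro allI impI)
        fix i assume i: "i < n"
        show "(deriv ^^ i) (\<lambda>z. J z - \<phi> z) 0 = 0"
        proof (cases "i = 0")
          case True then show ?thesis by (simp add: J0 \<phi>0)
        next
          case False
          have "(deriv ^^ i) (\<lambda>z. J z - \<phi> z) 0 = (deriv ^^ i) J 0 - (deriv ^^ i) \<phi> 0"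
            by (rule higher_deriv_diff[OF hJ h\<phi> ud_open ud_0])
          then show ?thesis using fJ fl\<phi> i False by (auto simp: flatn_def)
        qed
      qed
    qed
    show ?thesis unfolding flatn_def
    proof
      fix i assume i: "i \<in> {1..<n}"
      have "(deriv ^^ i) (\<lambda>z. Q z - 1) 0 = (deriv ^^ i) Q 0 - (deriv ^^ i) (\<lambda>z. 1) 0"
        by (rule higher_deriv_diff[OF hQ holomorphic_on_const ud_open ud_0])
      then show "(deriv ^^ i) Q 0 = 0" using A0 i by auto
    qed
  qed
  have fE: "flatn n E" unfolding E_def by (rule flat_branch_pow[OF hQ Qnz fQ n1])
  have classF: "class_A n F" unfolding class_A_def
  proof (intro conjI ballI)
    show "F holomorphic_on unit_disk" by (rule hF)
    show "F 0 = 0" by (simp add: Feq)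
    show "deriv F 0 = 1" using dF[OF ud_0] E0 by simp
    fix i assume i: "i \<in> {2..n}"
    have "(deriv ^^ i) F 0 = of_nat i * (deriv ^^ (i - 1)) E 0"
      unfolding Feq by (rule hd_zmult[OF hE]) (use i in auto)
    also have "(deriv ^^ (i - 1)) E 0 = 0"
    proof -
      have "i - 1 \<in> {1..<n}" using i by auto
      then show ?thesis using fE unfolding flatn_def by blast
    qed
    finally show "(deriv ^^ i) F 0 = 0" by simp
  qed
  show ?thesis using classF sub by (simp add: F_def)
qed

end
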